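(* Let $L<U$ be integers and let $M$ be a counting query which, for every dataset $D$, outputs an integer $M(D)\in\{L,L+1,\dots,U\}$, and which has $\ell_1$-sensitivity $\Delta$ (a positive integer), i.e. $|M(D)-M(D')|\le\Delta$ for all neighboring datasets $D\sim D'$. Let $\epsilon>0$ and let $\epsilon'>0$ be a solution of $\epsilon'+\log g(\epsilon')=\epsilon$, where $$g(\epsilon')=\frac{1+\alpha'-(\alpha')^{d+1}-(\alpha')^{U-L+1-d}}{1-(\alpha')^{U-L+1}},\qquad d=\min\Big\{\Delta,\Big\lceil\tfrac{U-L}{2}\Big\rceil\Big\},\qquad \alpha'=e^{-\epsilon'/\Delta}.$$ The renormalized geometric mechanism outputs $\widetilde M_{\mathrm{RGM}}(D)=M(D)+\delta$, where $\delta$ is drawn from $$\Pr(\delta=k)=\frac{e^{-|k|\epsilon'/\Delta}}{\sum_{l=L-M(D)}^{U-M(D)}e^{-|l|\epsilon'/\Delta}},\qquad k=L-M(D),\,L-M(D)+1,\dots,U-M(D).$$ Then the renormalized geometric mechanism satisfies $\epsilon$-differential privacy.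
   Context: Datasets $D,D'$ with the same number $n$ of individuals are neighboring ($D\sim D'$) if they differ by substitution of a single individual's data. A randomized algorithm $\mathcal{A}$ satisfies $\epsilon$-differential privacy if for all neighboring $D,D'$ and every measurable set $S$ in its range, $\Pr(\mathcal{A}(D)\in S)\le e^{\epsilon}\Pr(\mathcal{A}(D')\in S)$. The $\ell_1$-sensitivity of $M$ is $\Delta(M)=\max_{D\sim D'}|M(D)-M(D')|$. *)

theory Defs
  imports "HOL-Probability.Probability"
begin

text \<open>Datasets of n individuals are lists of length n; neighbouring datasets have the
same length and differ (at most) in the entry of a single individual (substitution).\<close>
definition neighboring :: "'a list \<Rightarrow> 'a list \<Rightarrow> bool" where
  "neighboring D D' \<longleftrightarrow> length D = length D' \<and>
     (\<exists>i<length D. \<forall>j<length D. j \<noteq> i \<longrightarrow> D ! j = D' ! j)"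

text \<open>epsilon-differential privacy for a randomized algorithm with discrete (integer) output;
every set of outputs is measurable.\<close>
definition differentially_private :: "real \<Rightarrow> ('a list \<Rightarrow> 'b pmf) \<Rightarrow> bool" where
  "differentially_private \<epsilon> A \<longleftrightarrow>
     (\<forall>D D' S. neighboring D D' \<longrightarrow>
        measure_pmf.prob (A D) S \<le> exp \<epsilon> * measure_pmf.prob (A D') S)"

definition rgm_d :: "int \<Rightarrow> int \<Rightarrow> int \<Rightarrow> int" where
  "rgm_d L U \<Delta> = min \<Delta> \<lceil>real_of_int (U - L) / 2\<rceil>"

definition rgm_g :: "int \<Rightarrow> int \<Rightarrow> int \<Rightarrow> real \<Rightarrow> real" where
  "rgm_g L U \<Delta> \<epsilon>' =
     (let \<alpha> = exp (- \<epsilon>' / real_of_int \<Delta>); d = rgm_d L U \<Delta> in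
      (1 + \<alpha> - \<alpha> powr real_of_int (d + 1) - \<alpha> powr real_of_int (U - L + 1 - d))
      / (1 - \<alpha> powr real_of_int (U - L + 1)))"

definition rgm_noise :: "int \<Rightarrow> int \<Rightarrow> int \<Rightarrow> real \<Rightarrow> int \<Rightarrow> int pmf" where
  "rgm_noise L U \<Delta> \<epsilon>' m = embed_pmf (\<lambda>k.
     if L - m \<le> k \<and> k \<le> U - m then
       exp (- \<bar>real_of_int k\<bar> * \<epsilon>' / real_of_int \<Delta>) /
       (\<Sum>l\<in>{L - m..U - m}. exp (- \<bar>real_of_int l\<bar> * \<epsilon>' / real_of_int \<Delta>))
     else 0)"

definition rgm :: "int \<Rightarrow> int \<Rightarrow> int \<Rightarrow> real \<Rightarrow> ('a list \<Rightarrow> int) \<Rightarrow> 'a list \<Rightarrow> int pmf" where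
  "rgm L U \<Delta> \<epsilon>' M D = map_pmf (\<lambda>k. M D + k) (rgm_noise L U \<Delta> \<epsilon>' (M D))"

end

theory Submission
  imports Defs
begin

lemma E_add: "exp (- (s + t) * c) = exp (- s * c) * exp (- t * (c::real))"
  by (simp add: exp_add[symmetric] algebra_simps)

lemma E_mono: "(c::real) > 0 \<Longrightarrow> s \<le> t \<Longrightarrow> exp (- t * c) \<le> exp (- s * c)"
  by (simp add: mult_right_mono)

lemma E_le1: "(c::real) > 0 \<Longrightarrow> 0 \<le> t \<Longrightarrow> exp (- t * c) \<le> 1"
  using E_mono[of c 0 t] by simp

lemma key_ineq:
  fixes c p d n :: real
  assumes "c > 0" "0 \<le> p" "p \<le> d" "p + d \<le> n"
  shows "exp (- d * c) + exp (- (n - d) * c) \<le> exp (- p * c) + exp (- (n - p) * c)"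
proof -
  have h1: "exp (- d * c) = exp (- p * c) * exp (- (d - p) * c)"
    using E_add[of p "d - p" c] by simp
  have h2: "exp (- (n - p) * c) = exp (- (n - d) * c) * exp (- (d - p) * c)"
    using E_add[of "n - d" "d - p" c] by simp
  have "exp (- (d - p) * c) \<le> 1" using E_le1[of c "d - p"] assms by simp
  moreover have "exp (- (n - d) * c) \<le> exp (- p * c)" using E_mono[of c p "n - d"] assms by simp
  ultimately have "exp (- (n - d) * c) * (1 - exp (- (d - p) * c)) \<le> exp (- p * c) * (1 - exp (- (d - p) * c))"
    by (simp add: mult_right_mono)
  then show ?thesis unfolding h1 h2 by (simp add: algebra_simps)
qed

definition FF :: "real \<Rightarrow> real \<Rightarrow> real \<Rightarrow> real" where
  "FF c n a = 1 + exp (- c) - exp (- (a + 1) * c) - exp (- (n + 1 - a) * c)"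

lemma FF_diff: "FF c n (a + s) - FF c n a =
    exp (- (a + 1) * c) * (1 - exp (- s * c)) * (1 - exp (- (n - 2 * a - s) * c))"
proof -
  have "exp (- (a + s + 1) * c) = exp (- (a + 1) * c) * exp (- s * c)"
    using E_add[of "a + 1" s c] by (simp add: algebra_simps)
  moreover have "exp (- (n + 1 - a) * c) = exp (- (a + 1) * c) * exp (- (n - 2 * a - s) * c) * exp (- s * c)"
    using E_add[of "a + 1" "n - 2 * a - s" c] E_add[of "a + 1 + (n - 2 * a - s)" s c]
    by (simp add: algebra_simps)
  moreover have "exp (- (n + 1 - (a + s)) * c) = exp (- (a + 1) * c) * exp (- (n - 2 * a - s) * c)"
    using E_add[of "a + 1" "n - 2 * a - s" c] by (simp add: algebra_simps)
  ultimately show ?thesis unfolding FF_def by (simp add: algebra_simps)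
qed

lemma FF_sym: "FF c n (n - a) = FF c n a"
  unfolding FF_def by (simp add: algebra_simps)

lemma FF_0: "FF c n 0 = 1 - exp (- (n + 1) * c)"
  unfolding FF_def by simp

lemma FF_0_pos: "c > 0 \<Longrightarrow> n \<ge> 0 \<Longrightarrow> FF c n 0 > 0"
proof -
  assume "c > 0" "n \<ge> 0"
  then have "(- (n + 1)) * c < 0" by (simp add: mult_neg_pos)
  then show ?thesis unfolding FF_0 by simp
qed

lemma FF_ge0: assumes "c > 0" "0 \<le> a" "a \<le> n" shows "FF c n 0 \<le> FF c n a"
proof -
  have "FF c n (0 + a) - FF c n 0 = exp (- (0 + 1) * c) * (1 - exp (- a * c)) * (1 - exp (- (n - 2 * 0 - a) * c))"
    by (rule FF_diff)
  moreover have "exp (- a * c) \<le> 1" "exp (- (n - 2 * 0 - a) * c) \<le> 1"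
    using E_le1[of c a] E_le1[of c "n - a"] assms by auto
  ultimately have "FF c n a - FF c n 0 \<ge> 0" by simp
  then show ?thesis by simp
qed

lemma prod_le:
  fixes c p r n d :: real
  assumes "c > 0" "0 \<le> p" "p \<le> r" "p + r \<le> n" "p \<le> d" "p + d \<le> n"
  shows "(1 - exp (- p * c)) * (1 - exp (- r * c)) \<le> (1 - exp (- d * c)) * (1 - exp (- (n - d) * c))"
proof -
  have "exp (- (n - p) * c) \<le> exp (- r * c)" using E_mono[of c r "n - p"] assms by simp
  moreover have "0 \<le> 1 - exp (- p * c)" using E_le1[of c p] assms by simp
  ultimately have "(1 - exp (- p * c)) * (1 - exp (- r * c)) \<le> (1 - exp (- p * c)) * (1 - exp (- (n - p) * c))"
    by (simp add: mult_left_mono)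
  also have "\<dots> = 1 - (exp (- p * c) + exp (- (n - p) * c)) + exp (- p * c) * exp (- (n - p) * c)"
    by (simp add: algebra_simps)
  also have "exp (- p * c) * exp (- (n - p) * c) = exp (- n * c)"
    using E_add[of p "n - p" c] by simp
  also have "exp (- d * c) * exp (- (n - d) * c) = exp (- n * c)"
    using E_add[of d "n - d" c] by simp
  then have "1 - (exp (- p * c) + exp (- (n - p) * c)) + exp (- n * c) \<le> (1 - exp (- d * c)) * (1 - exp (- (n - d) * c))"
    using key_ineq[of c p d n] assms by (simp add: algebra_simps)
  finally show ?thesis .
qed

lemma core_oriented:
  fixes a b n D :: int and c :: real
  assumes "c > 0" "0 \<le> a" "a \<le> b" "b \<le> n" "b - a \<le> D" "d = min D \<lceil>real_of_int n / 2\<rceil>"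
  shows "FF c n b * FF c n 0 \<le> FF c n d * FF c n a"
proof -
  define s where "s = b - a"
  define q where "q = n - 2 * a - s"
  have d0: "0 \<le> d" using assms by auto
  have dn: "2 * d \<le> n + 1"
  proof -
    have "real_of_int \<lceil>real_of_int n / 2\<rceil> < real_of_int n / 2 + 1" by linarith
    then have "\<lceil>real_of_int n / 2\<rceil> * 2 < n + 2" by linarith
    then show ?thesis using assms(6) by linarith
  qed
  have F0p: "FF c n 0 > 0" using FF_0_pos[of c n] assms by simp
  have Fa: "FF c n 0 \<le> FF c n a" using FF_ge0[of c a n] assms by simp
  have Fd: "FF c n 0 \<le> FF c n d" using FF_ge0[of c d n] assms d0 dn by simp
  have diff: "FF c n b - FF c n a = exp (- (a + 1) * c) * (1 - exp (- s * c)) * (1 - exp (- q * c))"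
    using FF_diff[of c n a s] unfolding s_def q_def by simp
  have diffd: "FF c n d - FF c n 0 = exp (- 1 * c) * (1 - exp (- d * c)) * (1 - exp (- (n - d) * c))"
    using FF_diff[of c n 0 d] by simp
  have goal: "FF c n 0 * (FF c n b - FF c n a) \<le> (FF c n d - FF c n 0) * FF c n a"
  proof (cases "q \<le> 0")
    case True
    have "exp (- q * c) \<ge> 1" using True assms by (simp add: mult_nonpos_nonneg)
    moreover have "1 - exp (- s * c) \<ge> 0" using E_le1[of c s] assms s_def by simp
    ultimately have "FF c n b - FF c n a \<le> 0" unfolding diff
      by (simp add: mult_nonneg_nonpos)
    then have "FF c n 0 * (FF c n b - FF c n a) \<le> 0" using F0p by (simp add: mult_nonneg_nonpos)
    also have "0 \<le> (FF c n d - FF c n 0) * FF c n a" using Fd Fa F0p by simp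
    finally show ?thesis .
  next
    case False
    define p where "p = min s q"
    define r where "r = max s q"
    have s0: "0 \<le> s" using assms s_def by simp
    have prq: "(1 - exp (- real_of_int s * c)) * (1 - exp (- real_of_int q * c)) = (1 - exp (- real_of_int p * c)) * (1 - exp (- real_of_int r * c))"
      unfolding p_def r_def by (cases "s \<le> q") (auto simp: min_def max_def)
    have le1: "(1 - exp (- real_of_int p * c)) * (1 - exp (- real_of_int r * c)) \<le> (1 - exp (- real_of_int d * c)) * (1 - exp (- (real_of_int n - real_of_int d) * c))"
    proof (rule prod_le)
      show "0 \<le> real_of_int p" using False s0 p_def by simp
      show "real_of_int p \<le> real_of_int r" using p_def r_def by simp
      show "real_of_int p + real_of_int r \<le> real_of_int n" using p_def r_def q_def s_def assms by simp
      have "p \<le> D" using p_def s_def assms by simp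
      moreover have "2 * p \<le> n" using p_def r_def q_def s_def assms by (simp add: min_def)
      moreover have "p \<le> \<lceil>real_of_int n / 2\<rceil>"
      proof -
        have "real_of_int p \<le> real_of_int n / 2" using \<open>2 * p \<le> n\<close> by linarith
        then show ?thesis by linarith
      qed
      ultimately show "real_of_int p \<le> real_of_int d" using assms(6) by simp
      show "real_of_int p + real_of_int d \<le> real_of_int n" proof -
        have "p + d \<le> n" using \<open>2 * p \<le> n\<close> dn by linarith
        then show ?thesis by linarith
      qed
    qed (use assms in auto)
    have A: "0 \<le> (1 - exp (- real_of_int s * c)) * (1 - exp (- real_of_int q * c))"
      using E_le1[of c s] E_le1[of c q] s0 False assms by simp
    have B: "exp (- (a + 1) * c) \<le> exp (- 1 * c)" using E_mono[of c 1 "a + 1"] assms by simp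
    have "FF c n 0 * (FF c n b - FF c n a) = FF c n 0 * exp (- (a + 1) * c) * ((1 - exp (- s * c)) * (1 - exp (- q * c)))"
      unfolding diff by (simp add: algebra_simps)
    also have "\<dots> \<le> FF c n a * exp (- 1 * c) * ((1 - exp (- s * c)) * (1 - exp (- q * c)))"
      using A B Fa F0p by (intro mult_right_mono mult_mono) auto
    also have "\<dots> \<le> FF c n a * exp (- 1 * c) * ((1 - exp (- d * c)) * (1 - exp (- (n - d) * c)))"
      using le1 prq Fa F0p by (intro mult_left_mono) auto
    also have "\<dots> = (FF c n d - FF c n 0) * FF c n a" unfolding diffd by (simp add: algebra_simps)
    finally show ?thesis .
  qed
  then show ?thesis by (simp add: algebra_simps)
qed

lemma core:
  fixes a b n D :: int and c :: real
  assumes "c > 0" "0 \<le> a" "a \<le> n" "0 \<le> b" "b \<le> n" "\<bar>b - a\<bar> \<le> D" "d = min D \<lceil>real_of_int n / 2\<rceil>"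
  shows "FF c n b * FF c n 0 \<le> FF c n d * FF c n a"
proof (cases "a \<le> b")
  case True
  then show ?thesis using core_oriented[of c a b n D d] assms by simp
next
  case False
  have "FF c n (n - b) * FF c n 0 \<le> FF c n d * FF c n (n - a)"
    using core_oriented[of c "n - a" "n - b" n D d] assms False by simp
  then show ?thesis using FF_sym[of c n a] FF_sym[of c n b] by simp
qed

lemma geo:
  fixes k :: int and c :: real
  assumes "0 \<le> k"
  shows "(1 - exp (- c)) * (\<Sum>l\<in>{0..k}. exp (- \<bar>real_of_int l\<bar> * c)) = 1 - exp (- (real_of_int k + 1) * c)"
  using assms
proof (induction k rule: int_ge_induct)
  case base
  then show ?case by simp
next
  case (step k)
  have "{0..k + 1} = insert (1 + k) {0..k}" using step atLeastAtMostPlus1_int_conv[of 0 k] by (simp add: add.commute)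
  then have "(\<Sum>l\<in>{0..k + 1}. exp (- \<bar>real_of_int l\<bar> * c)) = exp (- (real_of_int k + 1) * c) + (\<Sum>l\<in>{0..k}. exp (- \<bar>real_of_int l\<bar> * c))"
    using step by (simp add: algebra_simps)
  moreover have "exp (- (real_of_int k + 1 + 1) * c) = exp (- (real_of_int k + 1) * c) * exp (- c)"
    using E_add[of "real_of_int k + 1" 1 c] by simp
  moreover have "\<And>A B e X::real. B = A * e \<Longrightarrow> (1 - e) * X = 1 - A \<Longrightarrow> (1 - e) * (A + X) = 1 - B"
    by algebra
  ultimately show ?case using step.IH by simp
qed

lemma Zform:
  fixes a n :: int and c :: real
  assumes "0 \<le> a" "a \<le> n"
  shows "(1 - exp (- c)) * (\<Sum>l\<in>{-a..n-a}. exp (- \<bar>real_of_int l\<bar> * c)) = FF c n a"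
proof -
  let ?f = "\<lambda>l::int. exp (- \<bar>real_of_int l\<bar> * c)"
  have U: "{-a..n-a} = {-a..0} \<union> {0..n-a}" using assms by auto
  have I: "{-a..0} \<inter> {0..n-a} = {0::int}" using assms by auto
  have "sum ?f ({-a..0} \<union> {0..n-a}) + sum ?f ({-a..0} \<inter> {0..n-a}) = sum ?f {-a..0} + sum ?f {0..n-a}"
    by (rule sum.union_inter) auto
  then have S: "sum ?f {-a..n-a} = sum ?f {-a..0} + sum ?f {0..n-a} - 1" unfolding U[symmetric] I by simp
  have "sum ?f {-a..0} = sum ?f (uminus ` {0..a})" by (simp add: image_uminus_atLeastAtMost)
  also have "\<dots> = sum (?f \<circ> uminus) {0..a}" by (rule sum.reindex) simp
  also have "\<dots> = sum ?f {0..a}" by simp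
  finally have N: "sum ?f {-a..0} = sum ?f {0..a}" .
  have "(1 - exp (- c)) * sum ?f {-a..n-a} = (1 - exp (- c)) * sum ?f {0..a} + (1 - exp (- c)) * sum ?f {0..n-a} - (1 - exp (- c))"
    unfolding S N by (simp add: algebra_simps)
  also have "\<dots> = FF c n a" unfolding geo[OF assms(1)] geo[of "n - a" c, OF diff_ge_0_iff_ge[THEN iffD2, OF assms(2)]]
    by (simp add: FF_def algebra_simps)
  finally show ?thesis .
qed


lemma g_eq:
  assumes "\<Delta> > 0"
  shows "rgm_g L U \<Delta> e = FF (e / real_of_int \<Delta>) (real_of_int (U - L)) (real_of_int (rgm_d L U \<Delta>)) / FF (e / real_of_int \<Delta>) (real_of_int (U - L)) 0"
proof -
  have P: "exp (- e / real_of_int \<Delta>) powr r = exp (- r * (e / real_of_int \<Delta>))" for r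
    by (simp add: powr_def)
  show ?thesis unfolding rgm_g_def Let_def P FF_def by (simp add: algebra_simps)
qed

lemma term_eq: "exp (- \<bar>real_of_int l\<bar> * e / real_of_int D) = exp (- \<bar>real_of_int l\<bar> * (e / real_of_int D))"
  by simp

lemma Zs_pos:
  fixes L U m :: int
  assumes "L \<le> U"
  shows "(\<Sum>l\<in>{L - m..U - m}. exp (- \<bar>real_of_int l\<bar> * e / real_of_int D)) > 0"
  by (rule sum_pos) (use assms in auto)

lemma pmf_noise:
  fixes L U m :: int
  assumes "L \<le> U"
  shows "pmf (rgm_noise L U D e m) k = (if L - m \<le> k \<and> k \<le> U - m then
       exp (- \<bar>real_of_int k\<bar> * e / real_of_int D) /
       (\<Sum>l\<in>{L - m..U - m}. exp (- \<bar>real_of_int l\<bar> * e / real_of_int D))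
     else 0)"
  unfolding rgm_noise_def
proof (rule pmf_embed_pmf)
  let ?Z = "(\<Sum>l\<in>{L - m..U - m}. exp (- \<bar>real_of_int l\<bar> * e / real_of_int D))"
  have Zp: "?Z > 0" using Zs_pos[OF assms] .
  show "0 \<le> (if L - m \<le> x \<and> x \<le> U - m then exp (- \<bar>real_of_int x\<bar> * e / real_of_int D) / ?Z else 0)" for x
    using Zp by simp
  have "(\<integral>\<^sup>+ x. ennreal (if L - m \<le> x \<and> x \<le> U - m then exp (- \<bar>real_of_int x\<bar> * e / real_of_int D) / ?Z else 0) \<partial>count_space UNIV)
     = (\<Sum>x\<in>{L - m..U - m}. ennreal (if L - m \<le> x \<and> x \<le> U - m then exp (- \<bar>real_of_int x\<bar> * e / real_of_int D) / ?Z else 0))"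
    by (rule nn_integral_count_space') auto
  also have "\<dots> = (\<Sum>x\<in>{L - m..U - m}. ennreal (exp (- \<bar>real_of_int x\<bar> * e / real_of_int D) / ?Z))"
    by (rule sum.cong) auto
  also have "\<dots> = ennreal (\<Sum>x\<in>{L - m..U - m}. exp (- \<bar>real_of_int x\<bar> * e / real_of_int D) / ?Z)"
    using Zp by (subst sum_ennreal) auto
  also have "(\<Sum>x\<in>{L - m..U - m}. exp (- \<bar>real_of_int x\<bar> * e / real_of_int D) / ?Z) = 1"
    using Zp by (simp add: sum_divide_distrib[symmetric])
  finally show "(\<integral>\<^sup>+ x. ennreal (if L - m \<le> x \<and> x \<le> U - m then exp (- \<bar>real_of_int x\<bar> * e / real_of_int D) / ?Z else 0) \<partial>count_space UNIV) = 1"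
    by simp
qed

lemma pmf_rgm:
  fixes L U :: int
  assumes "L \<le> U"
  shows "pmf (rgm L U D e M DS) y = (if L \<le> y \<and> y \<le> U then
       exp (- \<bar>real_of_int (y - M DS)\<bar> * e / real_of_int D) /
       (\<Sum>l\<in>{L - M DS..U - M DS}. exp (- \<bar>real_of_int l\<bar> * e / real_of_int D))
     else 0)"
proof -
  have "pmf (rgm L U D e M DS) y = pmf (map_pmf (\<lambda>k. M DS + k) (rgm_noise L U D e (M DS))) (M DS + (y - M DS))"
    unfolding rgm_def by simp
  also have "\<dots> = pmf (rgm_noise L U D e (M DS)) (y - M DS)"
    by (rule pmf_map_inj') (simp add: inj_def)
  finally show ?thesis unfolding pmf_noise[OF assms] by auto
qed


lemma prob_le:
  fixes p q :: "'b pmf"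
  assumes "\<And>y. pmf p y \<le> C * pmf q y" "set_pmf p \<subseteq> A" "finite A" "C \<ge> 0"
  shows "measure_pmf.prob p S \<le> C * measure_pmf.prob q S"
proof -
  have "measure_pmf.prob p S = measure_pmf.prob p (S \<inter> set_pmf p)" by (simp add: measure_Int_set_pmf)
  also have "S \<inter> set_pmf p = (S \<inter> A) \<inter> set_pmf p" using assms(2) by auto
  also have "measure_pmf.prob p \<dots> = measure_pmf.prob p (S \<inter> A)" by (simp add: measure_Int_set_pmf)
  also have "\<dots> = sum (pmf p) (S \<inter> A)" using assms(3) by (simp add: measure_measure_pmf_finite)
  also have "\<dots> \<le> sum (\<lambda>y. C * pmf q y) (S \<inter> A)" by (rule sum_mono) (use assms(1) in auto)
  also have "\<dots> = C * measure_pmf.prob q (S \<inter> A)" using assms(3)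
    by (simp add: measure_measure_pmf_finite sum_distrib_left)
  also have "\<dots> \<le> C * measure_pmf.prob q S"
    using assms(4) by (intro mult_left_mono measure_pmf.finite_measure_mono) auto
  finally show ?thesis .
qed

theorem theoremS1:
  fixes L U \<Delta> :: int and M :: "'a list \<Rightarrow> int" and \<epsilon> \<epsilon>' :: real
  assumes "L < U"
    and "\<And>D. L \<le> M D \<and> M D \<le> U"
    and "\<Delta> > 0"
    and "\<And>D D'. neighboring D D' \<Longrightarrow> \<bar>M D - M D'\<bar> \<le> \<Delta>"
    and "\<epsilon> > 0" and "\<epsilon>' > 0"
    and "\<epsilon>' + ln (rgm_g L U \<Delta> \<epsilon>') = \<epsilon>"
  shows "differentially_private \<epsilon> (rgm L U \<Delta> \<epsilon>' M)"
  unfolding differentially_private_def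
proof (intro allI impI)
  fix D D' :: "'a list" and S :: "int set"
  assume nb: "neighboring D D'"
  define c where "c = \<epsilon>' / real_of_int \<Delta>"
  have c0: "c > 0" using assms c_def by simp
  define n where "n = U - L"
  define d where "d = rgm_d L U \<Delta>"
  have d_eq: "d = min \<Delta> \<lceil>real_of_int n / 2\<rceil>" unfolding d_def rgm_d_def n_def by simp
  define Z where "Z m = (\<Sum>l\<in>{L - m..U - m}. exp (- \<bar>real_of_int l\<bar> * \<epsilon>' / real_of_int \<Delta>))" for m
  have LU: "L \<le> U" using assms by simp
  have Zpos: "Z m > 0" for m unfolding Z_def using Zs_pos[OF LU] .
  have e1: "0 < 1 - exp (- c)" using c0 by simp
  have ZF: "Z m = FF c n (m - L) / (1 - exp (- c))" if "L \<le> m" "m \<le> U" for m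
  proof -
    have "{L - m..U - m} = {- (m - L)..(U - L) - (m - L)}" by auto
    then have "Z m = (\<Sum>l\<in>{- (m - L)..(U - L) - (m - L)}. exp (- \<bar>real_of_int l\<bar> * c))"
      unfolding Z_def c_def by simp
    moreover have "(1 - exp (- c)) * (\<Sum>l\<in>{- (m - L)..(U - L) - (m - L)}. exp (- \<bar>real_of_int l\<bar> * c)) = FF c (real_of_int (U - L)) (real_of_int (m - L))"
      by (rule Zform) (use that in auto)
    ultimately show ?thesis using e1 unfolding n_def by (simp add: field_simps)
  qed
  define g where "g = rgm_g L U \<Delta> \<epsilon>'"
  have g_eq': "g = FF c n d / FF c n 0" unfolding g_def c_def n_def d_def using g_eq[OF assms(3)] by simp
  have F0: "FF c n 0 > 0" using FF_0_pos[of c n] c0 LU n_def by simp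
  have gpos: "g > 0"
  proof -
    have "0 \<le> d" unfolding d_eq using assms(3) by (simp add: n_def) (use LU in linarith)
    moreover have "d \<le> n"
    proof -
      have "real_of_int \<lceil>real_of_int n / 2\<rceil> < real_of_int n / 2 + 1" by linarith
      then have "\<lceil>real_of_int n / 2\<rceil> \<le> n" using LU n_def assms(1) by linarith
      then show ?thesis unfolding d_eq by simp
    qed
    ultimately have "FF c n 0 \<le> FF c n d" using FF_ge0[of c d n] c0 by simp
    then show ?thesis unfolding g_eq' using F0 by simp
  qed
  have expe: "exp \<epsilon> = exp \<epsilon>' * g"
    using assms(7) gpos unfolding g_def[symmetric] by (auto simp: exp_add)
  define m where "m = M D"
  define m' where "m' = M D'"
  have mm: "\<bar>m - m'\<bar> \<le> \<Delta>" unfolding m_def m'_def using assms(4)[OF nb] .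
  have mr: "L \<le> m" "m \<le> U" "L \<le> m'" "m' \<le> U" unfolding m_def m'_def using assms(2) by auto
  have Zle: "Z m' \<le> g * Z m"
  proof -
    have "FF c n (m' - L) * FF c n 0 \<le> FF c n d * FF c n (m - L)"
      using core[of c "m - L" n "m' - L" \<Delta> d] c0 mr mm d_eq n_def by simp
    then have "FF c n (m' - L) \<le> FF c n d / FF c n 0 * FF c n (m - L)"
      using F0 by (simp add: field_simps)
    then have "FF c n (m' - L) / (1 - exp (- c)) \<le> FF c n d / FF c n 0 * FF c n (m - L) / (1 - exp (- c))"
      using e1 by (intro divide_right_mono) auto
    then show ?thesis unfolding ZF[OF mr(1,2)] ZF[OF mr(3,4)] g_eq' by simp
  qed
  have pw: "pmf (rgm L U \<Delta> \<epsilon>' M D) y \<le> exp \<epsilon> * pmf (rgm L U \<Delta> \<epsilon>' M D') y" for y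
  proof (cases "L \<le> y \<and> y \<le> U")
    case False
    then show ?thesis unfolding pmf_rgm[OF LU] by auto
  next
    case True
    have t1: "exp (- \<bar>real_of_int (y - m)\<bar> * \<epsilon>' / real_of_int \<Delta>) \<le> exp \<epsilon>' * exp (- \<bar>real_of_int (y - m')\<bar> * \<epsilon>' / real_of_int \<Delta>)"
    proof -
      have "\<bar>real_of_int (y - m')\<bar> \<le> \<bar>real_of_int (y - m)\<bar> + real_of_int \<Delta>" using mm by linarith
      then have "\<bar>real_of_int (y - m')\<bar> * c \<le> (\<bar>real_of_int (y - m)\<bar> + real_of_int \<Delta>) * c"
        using c0 by (simp add: mult_right_mono)
      moreover have "real_of_int \<Delta> * c = \<epsilon>'" unfolding c_def using assms(3) by simp
      ultimately have "- \<bar>real_of_int (y - m)\<bar> * c \<le> \<epsilon>' + - \<bar>real_of_int (y - m')\<bar> * c"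
        by (simp add: algebra_simps)
      then have "exp (- \<bar>real_of_int (y - m)\<bar> * c) \<le> exp (\<epsilon>' + - \<bar>real_of_int (y - m')\<bar> * c)" by simp
      then show ?thesis unfolding exp_add c_def by simp
    qed
    let ?A = "exp (- \<bar>real_of_int (y - m)\<bar> * \<epsilon>' / real_of_int \<Delta>)"
    let ?B = "exp (- \<bar>real_of_int (y - m')\<bar> * \<epsilon>' / real_of_int \<Delta>)"
    have "?A / Z m \<le> exp \<epsilon>' * ?B / Z m" using t1 Zpos[of m] by (simp add: divide_right_mono)
    also have "\<dots> = exp \<epsilon>' * g * ?B / (g * Z m)" using gpos by simp
    also have "\<dots> \<le> exp \<epsilon>' * g * ?B / Z m'"
      using Zle Zpos[of m'] gpos by (intro divide_left_mono) auto
    finally have "?A / Z m \<le> exp \<epsilon> * (?B / Z m')" unfolding expe by simp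
    then show ?thesis unfolding pmf_rgm[OF LU] Z_def m_def m'_def using True by simp
  qed
  have sp: "set_pmf (rgm L U \<Delta> \<epsilon>' M D) \<subseteq> {L..U}"
  proof
    fix y assume "y \<in> set_pmf (rgm L U \<Delta> \<epsilon>' M D)"
    then have "pmf (rgm L U \<Delta> \<epsilon>' M D) y \<noteq> 0" by (simp add: set_pmf_eq)
    then show "y \<in> {L..U}" unfolding pmf_rgm[OF LU] by (auto split: if_splits)
  qed
  show "measure_pmf.prob (rgm L U \<Delta> \<epsilon>' M D) S \<le> exp \<epsilon> * measure_pmf.prob (rgm L U \<Delta> \<epsilon>' M D') S"
    by (rule prob_le[OF pw sp]) auto
qed

end
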